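(* Consider the FJ-FA system with availability one and locality two (defined in the context), with systematic service rate $\gamma$ and recovery service rates $\mu$, and let $\nu = \gamma+2\mu$. Then the limiting fractions $f_0$ and $f_1$ of requests served with type-0 and type-1 service satisfy $$f_0 \ge \frac{\gamma\nu}{\gamma\nu + 2\mu^2}, \qquad f_1 \le \frac{2\mu^2}{\gamma\nu + 2\mu^2}.$$
   Context: Three servers store $a$ (systematic server), $b$ and $a+b$ (the two servers of the single recovery group for $a$). Requests arrive as a Poisson process of rate $\lambda$, and every request asks for $a$ (FJ-FA). Each request is replicated into a copy at the systematic server and a copy at the recovery group; the latter is forked into one sub-copy at each of the two recovery servers and completes when both finish. The request completes as soon as its systematic copy finishes or its recovery-group copy completes, and all its outstanding copies/sub-copies are then removed immediately. Each server has a FCFS queue and serves one sub-copy at a time; service times are independent, $\mathrm{Exp}(\gamma)$ at the systematic server and $\mathrm{Exp}(\mu)$ at each recovery server. A request is at the head of the line (HoL) once all its copies still in the system are in service; at that moment it starts service. Its service is of type 1 if one of its two recovery sub-copies had already finished service before it reached HoL, and of type 0 otherwise. The system is assumed stable, and $f_0, f_1$ ($f_0+f_1=1$) are the limiting fractions of requests whose service is of type 0 and type 1 respectively. *)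

theory Defs
  imports "HOL-Probability.Probability"
begin

text \<open>Index type for the primitive random variables of the FJ-FA system:
  interarrival times, and the service times of request n at the systematic
  server (storing a) and at the two recovery servers (storing b and a+b).\<close>
datatype idx = Arr nat | SysS nat | RecB nat | RecC nat

definition arrival :: "(nat \<Rightarrow> real) \<Rightarrow> nat \<Rightarrow> real" where
  "arrival X n = (\<Sum>k\<le>n. X k)"

text \<open>Sample-path dynamics.  free A Sa Sb Sc n = times at which the systematic
  server and the two recovery servers become free of request n-1 (i.e. are
  available to request n).  A copy/sub-copy of request n at server s starts at
  T = max (A n) (free time), would finish at F = T + S, the request completes at
  C = min Fa (max Fb Fc), and server s is then freed at min F C (either the
  sub-copy finished or it was cancelled at completion).\<close>
fun free :: "(nat \<Rightarrow> real) \<Rightarrow> (nat \<Rightarrow> real) \<Rightarrow> (nat \<Rightarrow> real) \<Rightarrow> (nat \<Rightarrow> real)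
              \<Rightarrow> nat \<Rightarrow> real \<times> real \<times> real" where
  "free A Sa Sb Sc 0 = (0, 0, 0)"
| "free A Sa Sb Sc (Suc n) =
     (case free A Sa Sb Sc n of (ea, eb, ec) \<Rightarrow>
       let ta = max (A n) ea; tb = max (A n) eb; tc = max (A n) ec;
           fa = ta + Sa n; fb = tb + Sb n; fc = tc + Sc n;
           c = min fa (max fb fc)
       in (min fa c, min fb c, min fc c))"

text \<open>Request n has type-1 service iff one of its recovery sub-copies finished
  service strictly before the request reached the head of the line, i.e. before
  the time when all its copies still in the system are in service (the maximum
  of the service start times of its three copies).\<close>
definition type1 :: "(nat \<Rightarrow> real) \<Rightarrow> (nat \<Rightarrow> real) \<Rightarrow> (nat \<Rightarrow> real) \<Rightarrow> (nat \<Rightarrow> real)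
                      \<Rightarrow> nat \<Rightarrow> bool" where
  "type1 A Sa Sb Sc n =
     (case free A Sa Sb Sc n of (ea, eb, ec) \<Rightarrow>
       let ta = max (A n) ea; tb = max (A n) eb; tc = max (A n) ec;
           fb = tb + Sb n; fc = tc + Sc n;
           hol = max ta (max tb tc)
       in fb < hol \<or> fc < hol)"

definition req_type1 :: "(idx \<Rightarrow> 'w \<Rightarrow> real) \<Rightarrow> 'w \<Rightarrow> nat \<Rightarrow> bool" where
  "req_type1 Z \<omega> n =
     type1 (arrival (\<lambda>k. Z (Arr k) \<omega>)) (\<lambda>k. Z (SysS k) \<omega>) (\<lambda>k. Z (RecB k) \<omega>)
           (\<lambda>k. Z (RecC k) \<omega>) n"

definition frac1 :: "(idx \<Rightarrow> 'w \<Rightarrow> real) \<Rightarrow> 'w \<Rightarrow> nat \<Rightarrow> real" where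
  "frac1 Z \<omega> N = real (card {n \<in> {..<N}. req_type1 Z \<omega> n}) / real N"

definition frac0 :: "(idx \<Rightarrow> 'w \<Rightarrow> real) \<Rightarrow> 'w \<Rightarrow> nat \<Rightarrow> real" where
  "frac0 Z \<omega> N = real (card {n \<in> {..<N}. \<not> req_type1 Z \<omega> n}) / real N"

end

theory Submission
  imports Defs "HOL-Real_Asymp.Real_Asymp"
begin

lemma l1: "min (fa::real) (max fb fc) = max (min fb (min fa (max fb fc))) (min fc (min fa (max fb fc)))"
  by (cases "fb \<le> fc"; cases "fa \<le> fb"; cases "fa \<le> fc"; simp add: min_def max_def)

lemma abs_min_id: "\<bar>min fb (min fa (max fb fc)) - min fc (min fa (max fb fc))\<bar> = \<bar>min fa fb - min (fa::real) fc\<bar>"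
  by (cases "fb \<le> fc"; cases "fa \<le> fb"; cases "fa \<le> fc"; simp add: min_def max_def)

lemma lip: "\<bar>max (x::real) p - max x q\<bar> \<le> \<bar>p - q\<bar>"
    by (cases "x \<le> p"; cases "x \<le> q"; simp add: max_def abs_if)

lemma free_inv: "fst (free A Sa Sb Sc n) = max (fst (snd (free A Sa Sb Sc n))) (snd (snd (free A Sa Sb Sc n)))"
proof (induction n)
  case 0 then show ?case by simp
next
  case (Suc n)
  obtain ea eb ec where e: "free A Sa Sb Sc n = (ea, eb, ec)" by (metis prod_cases3)
  show ?case apply (simp only: e free.simps prod.case Let_def fst_conv snd_conv min.left_idem) by (rule l1)
qed

lemma free_Suc_eq:
  assumes e: "free A Sa Sb Sc n = (ea, eb, ec)"
  shows "free A Sa Sb Sc (Suc n) =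
    (let ta = max (A n) ea; tb = max (A n) eb; tc = max (A n) ec;
         fa = ta + Sa n; fb = tb + Sb n; fc = tc + Sc n;
         c = min fa (max fb fc)
       in (min fa c, min fb c, min fc c))"
  using e by (simp only: free.simps prod.case)

lemma type1_iff:
  assumes e: "free A Sa Sb Sc n = (ea, eb, ec)"
  shows "type1 A Sa Sb Sc n \<longleftrightarrow> max (A n) eb + Sb n < max (max (A n) eb) (max (A n) ec)
     \<or> max (A n) ec + Sc n < max (max (A n) eb) (max (A n) ec)"
proof -
  have "ea = max eb ec" using free_inv[of A Sa Sb Sc n] e by simp
  have m: "max (max (A n) (max eb ec)) (max (max (A n) eb) (max (A n) ec)) = max (max (A n) eb) (max (A n) ec)"
    by (simp add: max_def)
  have m2: "max (A n) (max eb ec) = max (max (A n) eb) (max (A n) ec)"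
    by (simp add: max_def)
  show ?thesis unfolding type1_def e Let_def prod.case \<open>ea = max eb ec\<close> m2
    by (simp only: Let_def prod.case max.idem)
qed

lemma lead_step:
  assumes e: "free A Sa Sb Sc n = (ea, eb, ec)" and e': "free A Sa Sb Sc (Suc n) = (ea', eb', ec')"
  shows "\<bar>max (A (Suc n)) eb' - max (A (Suc n)) ec'\<bar>
     \<le> \<bar>min (max (max (A n) eb) (max (A n) ec) + Sa n) (max (A n) eb + Sb n)
         - min (max (max (A n) eb) (max (A n) ec) + Sa n) (max (A n) ec + Sc n)\<bar>"
proof -
  have ea: "ea = max eb ec" using free_inv[of A Sa Sb Sc n] e by simp
  have ta: "max (A n) ea = max (max (A n) eb) (max (A n) ec)" unfolding ea by (simp add: max_def)
  define ta where "ta = max (max (A n) eb) (max (A n) ec)"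
  define fa where "fa = ta + Sa n"
  define fb where "fb = max (A n) eb + Sb n"
  define fc where "fc = max (A n) ec + Sc n"
  have "free A Sa Sb Sc (Suc n) = (min fa (min fa (max fb fc)), min fb (min fa (max fb fc)), min fc (min fa (max fb fc)))"
    using free_Suc_eq[OF e] ta unfolding fa_def fb_def fc_def ta_def by (simp only: Let_def)
  then have E: "(ea', eb', ec') = (min fa (min fa (max fb fc)), min fb (min fa (max fb fc)), min fc (min fa (max fb fc)))"
    using e' by metis
  have q1: "eb' = min fb (min fa (max fb fc))" "ec' = min fc (min fa (max fb fc))" using E by (metis prod.inject)+
  have "\<bar>max (A (Suc n)) eb' - max (A (Suc n)) ec'\<bar> \<le> \<bar>eb' - ec'\<bar>" by (rule lip)
  also have "\<dots> = \<bar>min fa fb - min fa fc\<bar>" unfolding q1 by (rule abs_min_id)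
  finally show ?thesis unfolding fa_def fb_def fc_def ta_def .
qed

abbreviation ExpM :: "real \<Rightarrow> real measure" where
  "ExpM l \<equiv> density lborel (exponential_density l)"

definition Fd :: "real \<Rightarrow> real \<Rightarrow> real" where
  "Fd l s = (if 0 \<le> s then 1 - exp (- l * s) else 0)"
definition Sv :: "real \<Rightarrow> real \<Rightarrow> real" where
  "Sv l s = (if 0 \<le> s then exp (- l * s) else 1)"

lemma Ex_prob: "0 < l \<Longrightarrow> prob_space (ExpM l)"
  by (rule prob_space_exponential_density)

lemma sets_Ex[simp, measurable_cong]: "sets (ExpM l) = sets borel"
  by simp

lemma Fd_nonneg: "0 < l \<Longrightarrow> 0 \<le> Fd l s" by (simp add: Fd_def)
lemma Sv_nonneg: "0 \<le> Sv l s" by (simp add: Sv_def)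

lemma em_le: assumes "0 < l" shows "emeasure (ExpM l) {..s} = ennreal (Fd l s)"
  using emeasure_erlang_density[OF assms, of 0 s] by (simp add: erlang_CDF_0 Fd_def)

lemma em_gt: assumes l: "0 < l" shows "emeasure (ExpM l) {s<..} = ennreal (Sv l s)"
proof -
  interpret prob_space "ExpM l" by (rule Ex_prob[OF l])
  have "{s<..} = space (ExpM l) - {..s}" by auto
  then have "prob {s<..} = 1 - prob {..s}" using prob_compl[of "{..s}"] by simp
  moreover have "prob {..s} = Fd l s" using em_le[OF l, of s] Fd_nonneg[OF l, of s]
    by (simp add: emeasure_eq_measure ennreal_inj)
  ultimately show ?thesis by (simp add: emeasure_eq_measure Sv_def Fd_def)
qed


lemma layer_cake:
  fixes p x y :: real
  shows "ennreal \<bar>min p x - min p y\<bar> =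
    (\<integral>\<^sup>+t. ((if t < p \<and> x \<le> t \<and> t < y then 1 else 0) + (if t < p \<and> y \<le> t \<and> t < x then 1 else 0)) \<partial>lborel)"
proof -
  have eq: "((if t < p \<and> x \<le> t \<and> t < y then 1 else 0) + (if t < p \<and> y \<le> t \<and> t < x then 1 else 0) :: ennreal)
      = indicator {min x y ..< min p (max x y)} t" for t
    by (auto simp: indicator_def min_def max_def)
  have "(\<integral>\<^sup>+t. indicator {min x y ..< min p (max x y)} t \<partial>lborel) = emeasure lborel {min x y ..< min p (max x y)}"
    by simp
  also have "\<dots> = ennreal \<bar>min p x - min p y\<bar>"
  proof (cases "min x y \<le> min p (max x y)")
    case True
    then have "emeasure lborel {min x y ..< min p (max x y)} = ennreal (min p (max x y) - min x y)" by simp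
    moreover have "min p (max x y) - min x y = \<bar>min p x - min p y\<bar>" using True
      by (cases "x \<le> y"; cases "p \<le> x"; cases "p \<le> y"; simp add: min_def max_def)
    ultimately show ?thesis by simp
  next
    case False
    then have "p < x" "p < y" by (auto simp: min_def max_def split: if_splits)
    then show ?thesis using False by simp
  qed
  finally show ?thesis by (simp add: eq)
qed

lemma K1:
  fixes g m u v w :: real
  assumes g: "0 < g" and m: "0 < m"
  shows "(\<integral>\<^sup>+c. \<integral>\<^sup>+b. \<integral>\<^sup>+a. ennreal \<bar>min (w+a) (u+b) - min (w+a) (v+c)\<bar> \<partial>ExpM g \<partial>ExpM m \<partial>ExpM m)
    = (\<integral>\<^sup>+t. ennreal (Sv g (t-w) * (Fd m (t-u) * Sv m (t-v) + Fd m (t-v) * Sv m (t-u))) \<partial>lborel)"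
proof -
  interpret pg: prob_space "ExpM g" by (rule Ex_prob[OF g])
  interpret pm: prob_space "ExpM m" by (rule Ex_prob[OF m])
  interpret P2: pair_sigma_finite "ExpM m" "ExpM g" ..
  have sf2: "sigma_finite_measure (ExpM m \<Otimes>\<^sub>M ExpM g)"
    by (rule sigma_finite_pair_measure) (rule pm.sigma_finite_measure_axioms, rule pg.sigma_finite_measure_axioms)
  interpret s2: sigma_finite_measure "ExpM m \<Otimes>\<^sub>M ExpM g" by (rule sf2)
  interpret P3: pair_sigma_finite "ExpM m" "ExpM m \<Otimes>\<^sub>M ExpM g" ..
  have sf3: "sigma_finite_measure (ExpM m \<Otimes>\<^sub>M (ExpM m \<Otimes>\<^sub>M ExpM g))"
    by (rule sigma_finite_pair_measure) (rule pm.sigma_finite_measure_axioms, rule sf2)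
  interpret s3: sigma_finite_measure "ExpM m \<Otimes>\<^sub>M (ExpM m \<Otimes>\<^sub>M ExpM g)" by (rule sf3)
  interpret P3L: pair_sigma_finite "ExpM m \<Otimes>\<^sub>M (ExpM m \<Otimes>\<^sub>M ExpM g)" lborel ..
  define f where "f q = ennreal \<bar>min (w + snd (snd q)) (u + fst (snd q)) - min (w + snd (snd q)) (v + fst q)\<bar>" for q :: "real \<times> real \<times> real"
  have fm[measurable]: "f \<in> borel_measurable (ExpM m \<Otimes>\<^sub>M (ExpM m \<Otimes>\<^sub>M ExpM g))" unfolding f_def by measurable
  have inner: "(\<integral>\<^sup>+b. \<integral>\<^sup>+a. f (c, (b, a)) \<partial>ExpM g \<partial>ExpM m) = (\<integral>\<^sup>+p. f (c, p) \<partial>(ExpM m \<Otimes>\<^sub>M ExpM g))" for c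
    by (rule pg.nn_integral_fst) measurable
  have step2: "(\<integral>\<^sup>+c. \<integral>\<^sup>+b. \<integral>\<^sup>+a. ennreal \<bar>min (w+a) (u+b) - min (w+a) (v+c)\<bar> \<partial>ExpM g \<partial>ExpM m \<partial>ExpM m)
      = (\<integral>\<^sup>+q. f q \<partial>(ExpM m \<Otimes>\<^sub>M (ExpM m \<Otimes>\<^sub>M ExpM g)))"
  proof -
    have "(\<integral>\<^sup>+c. \<integral>\<^sup>+b. \<integral>\<^sup>+a. ennreal \<bar>min (w+a) (u+b) - min (w+a) (v+c)\<bar> \<partial>ExpM g \<partial>ExpM m \<partial>ExpM m)
        = (\<integral>\<^sup>+c. \<integral>\<^sup>+p. f (c, p) \<partial>(ExpM m \<Otimes>\<^sub>M ExpM g) \<partial>ExpM m)"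
      using inner by (simp add: f_def)
    also have "\<dots> = (\<integral>\<^sup>+q. f q \<partial>(ExpM m \<Otimes>\<^sub>M (ExpM m \<Otimes>\<^sub>M ExpM g)))"
      by (rule sigma_finite_measure.nn_integral_fst[OF sf2]) (rule fm)
    finally show ?thesis .
  qed
  define H where "H t q = ((if t < w + snd (snd q) \<and> u + fst (snd q) \<le> t \<and> t < v + fst q then 1 else 0)
     + (if t < w + snd (snd q) \<and> v + fst q \<le> t \<and> t < u + fst (snd q) then 1 else 0) :: ennreal)" for t q
  have Hm[measurable]: "(\<lambda>(q, t). H t q) \<in> borel_measurable ((ExpM m \<Otimes>\<^sub>M (ExpM m \<Otimes>\<^sub>M ExpM g)) \<Otimes>\<^sub>M lborel)"
    unfolding H_def by measurable
  have fH: "f q = (\<integral>\<^sup>+t. H t q \<partial>lborel)" for q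
    unfolding f_def H_def by (rule layer_cake)
  have step3: "(\<integral>\<^sup>+q. f q \<partial>(ExpM m \<Otimes>\<^sub>M (ExpM m \<Otimes>\<^sub>M ExpM g))) = (\<integral>\<^sup>+t. \<integral>\<^sup>+q. H t q \<partial>(ExpM m \<Otimes>\<^sub>M (ExpM m \<Otimes>\<^sub>M ExpM g)) \<partial>lborel)"
    unfolding fH by (rule P3L.Fubini'[symmetric]) (use Hm in simp)
  have step4: "(\<integral>\<^sup>+q. H t q \<partial>(ExpM m \<Otimes>\<^sub>M (ExpM m \<Otimes>\<^sub>M ExpM g)))
     = ennreal (Sv g (t-w) * (Fd m (t-u) * Sv m (t-v) + Fd m (t-v) * Sv m (t-u)))" for t
  proof -
    define A1 where "A1 = {t - v <..} \<times> ({.. t - u} \<times> {t - w <..})"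
    define A2 where "A2 = {.. t - v} \<times> ({t - u <..} \<times> {t - w <..})"
    have HA: "H t q = indicator A1 q + indicator A2 q" for q
      unfolding H_def A1_def A2_def by (cases q) (auto simp: indicator_def)
    have s1: "A1 \<in> sets (ExpM m \<Otimes>\<^sub>M (ExpM m \<Otimes>\<^sub>M ExpM g))" "A2 \<in> sets (ExpM m \<Otimes>\<^sub>M (ExpM m \<Otimes>\<^sub>M ExpM g))"
      unfolding A1_def A2_def by (auto intro!: pair_measureI)
    have "(\<integral>\<^sup>+q. H t q \<partial>(ExpM m \<Otimes>\<^sub>M (ExpM m \<Otimes>\<^sub>M ExpM g)))
        = emeasure (ExpM m \<Otimes>\<^sub>M (ExpM m \<Otimes>\<^sub>M ExpM g)) A1 + emeasure (ExpM m \<Otimes>\<^sub>M (ExpM m \<Otimes>\<^sub>M ExpM g)) A2"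
      unfolding HA using s1 by (simp add: nn_integral_add)
    also have "emeasure (ExpM m \<Otimes>\<^sub>M (ExpM m \<Otimes>\<^sub>M ExpM g)) A1 = ennreal (Sv m (t-v)) * (ennreal (Fd m (t-u)) * ennreal (Sv g (t-w)))"
      unfolding A1_def
      by (simp add: sigma_finite_measure.emeasure_pair_measure_Times[OF sf2] pg.emeasure_pair_measure_Times pair_measureI em_le em_gt g m)
    also have "emeasure (ExpM m \<Otimes>\<^sub>M (ExpM m \<Otimes>\<^sub>M ExpM g)) A2 = ennreal (Fd m (t-v)) * (ennreal (Sv m (t-u)) * ennreal (Sv g (t-w)))"
      unfolding A2_def
      by (simp add: sigma_finite_measure.emeasure_pair_measure_Times[OF sf2] pg.emeasure_pair_measure_Times pair_measureI em_le em_gt g m)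
    finally show ?thesis using Fd_nonneg[OF m] Sv_nonneg
      by (simp add: ennreal_mult'[symmetric] ennreal_plus[symmetric] algebra_simps del: ennreal_plus)
  qed
  show ?thesis unfolding step2 step3 step4 ..
qed

lemma exp_lim0: assumes "0 < (k::real)" shows "((\<lambda>t. exp (- k * (t - v))) \<longlongrightarrow> 0) at_top"
proof -
  have "filterlim (\<lambda>t. - k * (t - v)) at_bot at_top"
    using assms by real_asymp
  then show ?thesis by (rule filterlim_compose[OF exp_at_bot])
qed

lemma K2:
  fixes g m u v :: real
  assumes g: "0 < g" and m: "0 < m" and uv: "u \<le> v"
  shows "(\<integral>\<^sup>+t. ennreal (Sv g (t-v) * (Fd m (t-u) * Sv m (t-v) + Fd m (t-v) * Sv m (t-u))) \<partial>lborel)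
    \<le> ennreal ((v - u) - (1 - exp (- m * (v - u))) / m + (1 + exp (- m * (v - u))) / (g + m)
                 - 2 * exp (- m * (v - u)) / (g + 2 * m))"
proof -
  define Z where "Z = exp (- m * (v - u))"
  have Z0: "0 < Z" and Z1: "Z \<le> 1" using m uv by (auto simp: Z_def)
  define f1 where "f1 t = 1 - exp (- m * (t - u))" for t
  define f2 where "f2 t = (1 + Z) * exp (- (g + m) * (t - v)) - 2 * Z * exp (- (g + 2 * m) * (t - v))" for t
  define F1 where "F1 t = t + exp (- m * (t - u)) / m" for t
  define F2 where "F2 t = - (1 + Z) * exp (- (g + m) * (t - v)) / (g + m) + 2 * Z * exp (- (g + 2 * m) * (t - v)) / (g + 2 * m)" for t
  have f2_alt: "f2 t = exp (- g * (t - v)) * ((1 - exp (- m * (t - u))) * exp (- m * (t - v)) + (1 - exp (- m * (t - v))) * exp (- m * (t - u)))" for t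
  proof -
    have e1: "exp (- m * (t - u)) = exp (- m * (t - v)) * Z" unfolding Z_def by (simp add: exp_add[symmetric] algebra_simps)
    have e2: "exp (- (g + m) * (t - v)) = exp (- g * (t - v)) * exp (- m * (t - v))" by (simp add: exp_add[symmetric] algebra_simps)
    have e3: "exp (- (g + 2 * m) * (t - v)) = exp (- g * (t - v)) * exp (- m * (t - v)) * exp (- m * (t - v))"
      by (simp add: exp_add[symmetric] algebra_simps)
    show ?thesis unfolding f2_def e1 e2 e3 by (simp add: algebra_simps)
  qed
  have f1_nn: "0 \<le> f1 t" if "u \<le> t" for t using that m by (simp add: f1_def)
  have f2_nn: "0 \<le> f2 t" if "v \<le> t" for t
    unfolding f2_alt using that uv m by (intro mult_nonneg_nonneg add_nonneg_nonneg) auto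
  have pw: "ennreal (Sv g (t-v) * (Fd m (t-u) * Sv m (t-v) + Fd m (t-v) * Sv m (t-u)))
      \<le> ennreal (f1 t) * indicator {u..v} t + ennreal (f2 t) * indicator {v..} t" for t
  proof (cases "t < u")
    case True then show ?thesis using uv by (simp add: Fd_def)
  next
    case False
    show ?thesis
    proof (cases "t < v")
      case True then show ?thesis using False by (simp add: Fd_def Sv_def f1_def indicator_def)
    next
      case tv: False
      have "Sv g (t-v) * (Fd m (t-u) * Sv m (t-v) + Fd m (t-v) * Sv m (t-u)) = f2 t"
        unfolding f2_alt using tv False by (simp add: Fd_def Sv_def)
      then show ?thesis using tv by (simp add: indicator_def)
    qed
  qed
  have I1: "(\<integral>\<^sup>+t. ennreal (f1 t) * indicator {u..v} t \<partial>lborel) = ennreal (F1 v - F1 u)"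
  proof (rule nn_integral_FTC_Icc)
    show "f1 \<in> borel_measurable borel" unfolding f1_def by measurable
    show "DERIV F1 x :> f1 x" if "x \<in> {u..v}" for x
      unfolding F1_def f1_def using m by (auto intro!: derivative_eq_intros simp: field_simps)
    show "0 \<le> f1 x" if "x \<in> {u..v}" for x using f1_nn that by auto
  qed (use uv in auto)
  have I2: "(\<integral>\<^sup>+t. ennreal (f2 t) * indicator {v..} t \<partial>lborel) = ennreal (0 - F2 v)"
  proof (rule nn_integral_FTC_atLeast)
    show "f2 \<in> borel_measurable borel" unfolding f2_def by measurable
    show "DERIV F2 x :> f2 x" if "v \<le> x" for x
    proof -
      have d1: "((\<lambda>t. exp (- (g + m) * (t - v))) has_real_derivative (exp (- (g + m) * (x - v)) * (- (g + m)))) (at x)"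
        by (rule derivative_eq_intros refl | simp)+
      have d2: "((\<lambda>t. exp (- (g + 2 * m) * (t - v))) has_real_derivative (exp (- (g + 2 * m) * (x - v)) * (- (g + 2 * m)))) (at x)"
        by (rule derivative_eq_intros refl | simp)+
      have alg: "- (1 + Z) * (e1 * (- (g + m))) / (g + m) + 2 * Z * (e2 * (- (g + 2 * m))) / (g + 2 * m)
          = (1 + Z) * e1 - 2 * Z * e2" for e1 e2 :: real
      proof -
        have h1: "g + m \<noteq> 0" "g + 2 * m \<noteq> 0" using g m by auto
        have a: "- (1 + Z) * (e1 * (- (g + m))) / (g + m) = (1 + Z) * e1"
          using h1(1) by (simp add: nonzero_divide_eq_eq algebra_simps)
        have b: "2 * Z * (e2 * (- (g + 2 * m))) / (g + 2 * m) = - (2 * Z * e2)"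
          using h1(2) by (simp add: nonzero_divide_eq_eq algebra_simps)
        show ?thesis unfolding a b by simp
      qed
      have "DERIV F2 x :> (- (1 + Z) * (exp (- (g + m) * (x - v)) * (- (g + m))) / (g + m)
             + 2 * Z * (exp (- (g + 2 * m) * (x - v)) * (- (g + 2 * m))) / (g + 2 * m))"
        unfolding F2_def by (intro DERIV_add DERIV_cdivide DERIV_cmult d1 d2)
      then show ?thesis unfolding alg f2_def .
    qed
    show "0 \<le> f2 x" if "v \<le> x" for x using f2_nn that by auto
    show "(F2 \<longlongrightarrow> 0) at_top" unfolding F2_def
      using tendsto_add[OF tendsto_divide[OF tendsto_mult[OF tendsto_const exp_lim0[of "g + m" v]] tendsto_const]
                           tendsto_divide[OF tendsto_mult[OF tendsto_const exp_lim0[of "g + 2 * m" v]] tendsto_const]]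
        g m by simp
  qed
  have n1: "0 \<le> F1 v - F1 u"
  proof -
    have "1 + (- m * (v - u)) \<le> Z" unfolding Z_def by (rule exp_ge_add_one_self)
    then have "1 - Z \<le> m * (v - u)" by simp
    then have "(1 - Z) / m \<le> v - u" using m by (simp add: divide_le_eq mult.commute)
    then show ?thesis unfolding F1_def Z_def[symmetric] using m by (simp add: diff_divide_distrib)
  qed
  have n2: "0 \<le> 0 - F2 v"
  proof -
    have "2 * Z / (g + 2 * m) \<le> 2 * Z / (g + m)" using g m Z0 by (intro divide_left_mono) auto
    also have "\<dots> \<le> (1 + Z) / (g + m)" using Z1 g m by (intro divide_right_mono) auto
    finally have "2 * Z / (g + 2 * m) \<le> (1 + Z) / (g + m)" .
    moreover have "- ((- 1 - Z) / (g + m)) = (1 + Z) / (g + m)" by (simp add: divide_simps)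
    ultimately show ?thesis unfolding F2_def by simp
  qed
  have "(\<integral>\<^sup>+t. ennreal (Sv g (t-v) * (Fd m (t-u) * Sv m (t-v) + Fd m (t-v) * Sv m (t-u))) \<partial>lborel)
      \<le> (\<integral>\<^sup>+t. ennreal (f1 t) * indicator {u..v} t + ennreal (f2 t) * indicator {v..} t \<partial>lborel)"
    by (rule nn_integral_mono) (rule pw)
  also have "\<dots> = (\<integral>\<^sup>+t. ennreal (f1 t) * indicator {u..v} t \<partial>lborel) + (\<integral>\<^sup>+t. ennreal (f2 t) * indicator {v..} t \<partial>lborel)"
    by (rule nn_integral_add) (auto simp: f1_def f2_def)
  also have "\<dots> = ennreal ((F1 v - F1 u) + (0 - F2 v))" unfolding I1 I2 using ennreal_plus[OF n1 n2] by simp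
  also have "(F1 v - F1 u) + (0 - F2 v) = (v - u) - (1 - Z) / m + (1 + Z) / (g + m) - 2 * Z / (g + 2 * m)"
  proof -
    have "F1 v = v + Z / m" "F1 u = u + 1 / m" unfolding F1_def Z_def by simp_all
    moreover have "F2 v = - (1 + Z) / (g + m) + 2 * Z / (g + 2 * m)" unfolding F2_def by simp
    ultimately show ?thesis by (simp add: diff_divide_distrib add_divide_distrib)
  qed
  finally show ?thesis unfolding Z_def .
qed

lemma nest3:
  fixes g m :: real
  assumes g: "0 < g" and m: "0 < m"
    and fm: "f \<in> borel_measurable (ExpM m \<Otimes>\<^sub>M (ExpM m \<Otimes>\<^sub>M ExpM g))"
  shows "(\<integral>\<^sup>+c. \<integral>\<^sup>+b. \<integral>\<^sup>+a. f (c, (b, a)) \<partial>ExpM g \<partial>ExpM m \<partial>ExpM m) = (\<integral>\<^sup>+q. f q \<partial>(ExpM m \<Otimes>\<^sub>M (ExpM m \<Otimes>\<^sub>M ExpM g)))"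
proof -
  interpret pg: prob_space "ExpM g" by (rule Ex_prob[OF g])
  interpret pm: prob_space "ExpM m" by (rule Ex_prob[OF m])
  have sf2: "sigma_finite_measure (ExpM m \<Otimes>\<^sub>M ExpM g)"
    by (rule sigma_finite_pair_measure) (rule pm.sigma_finite_measure_axioms, rule pg.sigma_finite_measure_axioms)
  have inner: "(\<integral>\<^sup>+b. \<integral>\<^sup>+a. f (c, (b, a)) \<partial>ExpM g \<partial>ExpM m) = (\<integral>\<^sup>+p. f (c, p) \<partial>(ExpM m \<Otimes>\<^sub>M ExpM g))" for c
    by (rule pg.nn_integral_fst) (use fm in measurable)
  have "(\<integral>\<^sup>+c. \<integral>\<^sup>+b. \<integral>\<^sup>+a. f (c, (b, a)) \<partial>ExpM g \<partial>ExpM m \<partial>ExpM m) = (\<integral>\<^sup>+c. \<integral>\<^sup>+p. f (c, p) \<partial>(ExpM m \<Otimes>\<^sub>M ExpM g) \<partial>ExpM m)"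
    using inner by simp
  also have "\<dots> = (\<integral>\<^sup>+q. f q \<partial>(ExpM m \<Otimes>\<^sub>M (ExpM m \<Otimes>\<^sub>M ExpM g)))"
    by (rule sigma_finite_measure.nn_integral_fst[OF sf2]) (rule fm)
  finally show ?thesis .
qed

definition Phi1 :: "real \<Rightarrow> real \<Rightarrow> real \<Rightarrow> real \<Rightarrow> real \<Rightarrow> real \<Rightarrow> ennreal" where
  "Phi1 k u v a b c = (if u + b < max u v \<or> v + c < max u v then ennreal k else 0)
      + ennreal \<bar>min (max u v + a) (u + b) - min (max u v + a) (v + c)\<bar>"
definition Phi2 :: "real \<Rightarrow> real \<Rightarrow> real \<Rightarrow> real \<Rightarrow> real \<Rightarrow> real \<Rightarrow> ennreal" where
  "Phi2 k u v a b c = ennreal \<bar>u - v\<bar> + (if u + b < max u v \<or> v + c < max u v then 0 else ennreal k)"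

lemma IL:
  fixes g m u v :: real
  assumes g: "0 < g" and m: "0 < m"
  defines "c1 \<equiv> g / (m * (g + m))" and "c2 \<equiv> 2 * m / ((g + 2 * m) * (g + m))"
  shows "(\<integral>\<^sup>+c. \<integral>\<^sup>+b. \<integral>\<^sup>+a. Phi1 c1 u v a b c \<partial>ExpM g \<partial>ExpM m \<partial>ExpM m)
       \<le> (\<integral>\<^sup>+c. \<integral>\<^sup>+b. \<integral>\<^sup>+a. Phi2 c2 u v a b c \<partial>ExpM g \<partial>ExpM m \<partial>ExpM m)"
proof -
  interpret pg: prob_space "ExpM g" by (rule Ex_prob[OF g])
  interpret pm: prob_space "ExpM m" by (rule Ex_prob[OF m])
  have sf2: "sigma_finite_measure (ExpM m \<Otimes>\<^sub>M ExpM g)"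
    by (rule sigma_finite_pair_measure) (rule pm.sigma_finite_measure_axioms, rule pg.sigma_finite_measure_axioms)
  let ?P = "ExpM m \<Otimes>\<^sub>M (ExpM m \<Otimes>\<^sub>M ExpM g)"
  define w where "w = max u v"
  have em3: "emeasure ?P (A \<times> (B \<times> C)) = emeasure (ExpM m) A * (emeasure (ExpM m) B * emeasure (ExpM g) C)"
    if "A \<in> sets borel" "B \<in> sets borel" "C \<in> sets borel" for A B C
    using that by (simp add: sigma_finite_measure.emeasure_pair_measure_Times[OF sf2] pg.emeasure_pair_measure_Times pair_measureI)
  have spg: "emeasure (ExpM g) UNIV = 1" using pg.emeasure_space_1 by simp
  have spm: "emeasure (ExpM m) UNIV = 1" using pm.emeasure_space_1 by simp
  have c1: "0 \<le> c1" "0 \<le> c2" unfolding c1_def c2_def using g m by auto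
  define f1 where "f1 q = (if u + fst (snd q) < w \<or> v + fst q < w then ennreal c1 else 0)" for q :: "real \<times> real \<times> real"
  define f2 where "f2 q = ennreal \<bar>min (w + snd (snd q)) (u + fst (snd q)) - min (w + snd (snd q)) (v + fst q)\<bar>" for q :: "real \<times> real \<times> real"
  have f1m[measurable]: "f1 \<in> borel_measurable ?P" unfolding f1_def by measurable
  have f2m[measurable]: "f2 \<in> borel_measurable ?P" unfolding f2_def by measurable
  have "(\<integral>\<^sup>+c. \<integral>\<^sup>+b. \<integral>\<^sup>+a. Phi1 c1 u v a b c \<partial>ExpM g \<partial>ExpM m \<partial>ExpM m) = (\<integral>\<^sup>+c. \<integral>\<^sup>+b. \<integral>\<^sup>+a. (\<lambda>q. f1 q + f2 q) (c, (b, a)) \<partial>ExpM g \<partial>ExpM m \<partial>ExpM m)"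
    unfolding Phi1_def f1_def f2_def w_def by simp
  also have "\<dots> = (\<integral>\<^sup>+q. f1 q + f2 q \<partial>?P)" by (rule nest3[OF g m]) measurable
  also have "\<dots> = (\<integral>\<^sup>+q. f1 q \<partial>?P) + (\<integral>\<^sup>+q. f2 q \<partial>?P)" by (rule nn_integral_add) auto
  finally have L1: "(\<integral>\<^sup>+c. \<integral>\<^sup>+b. \<integral>\<^sup>+a. Phi1 c1 u v a b c \<partial>ExpM g \<partial>ExpM m \<partial>ExpM m) = (\<integral>\<^sup>+q. f1 q \<partial>?P) + (\<integral>\<^sup>+q. f2 q \<partial>?P)" .
  have uu: "(UNIV :: (real \<times> real) set) \<in> sets (borel \<Otimes>\<^sub>M borel)"
    using sets.top[of "borel \<Otimes>\<^sub>M borel :: (real \<times> real) measure"] by (simp add: space_pair_measure)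
  have uu3: "(UNIV :: (real \<times> real \<times> real) set) \<in> sets (borel \<Otimes>\<^sub>M (borel \<Otimes>\<^sub>M borel))"
    using sets.top[of "borel \<Otimes>\<^sub>M (borel \<Otimes>\<^sub>M borel) :: (real \<times> real \<times> real) measure"] by (simp add: space_pair_measure)
  define S1 where "S1 = (UNIV::real set) \<times> ({..w-u} \<times> (UNIV::real set))"
  define S2 where "S2 = {..w-v} \<times> ((UNIV::real set) \<times> (UNIV::real set))"
  have sS: "S1 \<in> sets ?P" "S2 \<in> sets ?P" unfolding S1_def S2_def using uu uu3 by (auto intro!: pair_measureI)
  have eS1: "emeasure ?P S1 = ennreal (Fd m (w - u))" unfolding S1_def
    by (subst em3) (auto simp: spg spm em_le[OF m])
  have eS2: "emeasure ?P S2 = ennreal (Fd m (w - v))" unfolding S2_def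
    by (subst em3) (auto simp: spg spm em_le[OF m])
  have "(\<integral>\<^sup>+q. f1 q \<partial>?P) \<le> (\<integral>\<^sup>+q. ennreal c1 * indicator S1 q + ennreal c1 * indicator S2 q \<partial>?P)"
    by (rule nn_integral_mono) (auto simp: f1_def indicator_def S1_def S2_def)
  also have "\<dots> = ennreal c1 * emeasure ?P S1 + ennreal c1 * emeasure ?P S2"
    using sS by (simp add: nn_integral_add nn_integral_cmult_indicator)
  also have "\<dots> = ennreal (c1 * Fd m (w - u) + c1 * Fd m (w - v))"
    using c1 Fd_nonneg[OF m] by (simp add: eS1 eS2 ennreal_mult ennreal_plus)
  finally have L2: "(\<integral>\<^sup>+q. f1 q \<partial>?P) \<le> ennreal (c1 * Fd m (w - u) + c1 * Fd m (w - v))" .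
  have "(\<integral>\<^sup>+q. f2 q \<partial>?P) = (\<integral>\<^sup>+c. \<integral>\<^sup>+b. \<integral>\<^sup>+a. f2 (c, (b, a)) \<partial>ExpM g \<partial>ExpM m \<partial>ExpM m)"
    by (rule nest3[OF g m, symmetric]) measurable
  also have "\<dots> = (\<integral>\<^sup>+t. ennreal (Sv g (t-w) * (Fd m (t-u) * Sv m (t-v) + Fd m (t-v) * Sv m (t-u))) \<partial>lborel)"
    unfolding f2_def using K1[OF g m, of w u v] by simp
  finally have L3: "(\<integral>\<^sup>+q. f2 q \<partial>?P) = (\<integral>\<^sup>+t. ennreal (Sv g (t-w) * (Fd m (t-u) * Sv m (t-v) + Fd m (t-v) * Sv m (t-u))) \<partial>lborel)" .
  define S3 where "S3 = (UNIV::real set) \<times> ((UNIV::real set) \<times> (UNIV::real set))"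
  define S4 where "S4 = {w-v<..} \<times> ({w-u<..} \<times> (UNIV::real set))"
  have sS': "S3 \<in> sets ?P" "S4 \<in> sets ?P" unfolding S3_def S4_def using uu uu3 by (auto intro!: pair_measureI)
  have eS3: "emeasure ?P S3 = 1" unfolding S3_def
    by (subst em3) (auto simp: spg spm)
  have eS4: "emeasure ?P S4 = ennreal (Sv m (w - v) * Sv m (w - u))" unfolding S4_def
    by (subst em3) (auto simp: spg spm em_gt[OF m] Sv_nonneg ennreal_mult)
  have "(\<integral>\<^sup>+c. \<integral>\<^sup>+b. \<integral>\<^sup>+a. Phi2 c2 u v a b c \<partial>ExpM g \<partial>ExpM m \<partial>ExpM m)
      = (\<integral>\<^sup>+c. \<integral>\<^sup>+b. \<integral>\<^sup>+a. (\<lambda>q. Phi2 c2 u v (snd (snd q)) (fst (snd q)) (fst q)) (c, (b, a)) \<partial>ExpM g \<partial>ExpM m \<partial>ExpM m)"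
    by simp
  also have "\<dots> = (\<integral>\<^sup>+q. Phi2 c2 u v (snd (snd q)) (fst (snd q)) (fst q) \<partial>?P)"
    by (rule nest3[OF g m]) (unfold Phi2_def, measurable)
  also have "\<dots> \<ge> (\<integral>\<^sup>+q. ennreal \<bar>u - v\<bar> * indicator S3 q + ennreal c2 * indicator S4 q \<partial>?P)"
    by (rule nn_integral_mono) (auto simp: Phi2_def indicator_def w_def S3_def S4_def)
  finally have R1: "(\<integral>\<^sup>+q. ennreal \<bar>u - v\<bar> * indicator S3 q + ennreal c2 * indicator S4 q \<partial>?P)
      \<le> (\<integral>\<^sup>+c. \<integral>\<^sup>+b. \<integral>\<^sup>+a. Phi2 c2 u v a b c \<partial>ExpM g \<partial>ExpM m \<partial>ExpM m)" .
  have "(\<integral>\<^sup>+q. ennreal \<bar>u - v\<bar> * indicator S3 q + ennreal c2 * indicator S4 q \<partial>?P)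
     = ennreal \<bar>u - v\<bar> * emeasure ?P S3 + ennreal c2 * emeasure ?P S4"
    using sS' by (simp add: nn_integral_add nn_integral_cmult_indicator)
  also have "\<dots> = ennreal (\<bar>u - v\<bar> + c2 * (Sv m (w - v) * Sv m (w - u)))"
    using c1 Sv_nonneg by (simp add: eS3 eS4 ennreal_mult ennreal_plus)
  finally have R2: "ennreal (\<bar>u - v\<bar> + c2 * (Sv m (w - v) * Sv m (w - u))) \<le> (\<integral>\<^sup>+c. \<integral>\<^sup>+b. \<integral>\<^sup>+a. Phi2 c2 u v a b c \<partial>ExpM g \<partial>ExpM m \<partial>ExpM m)"
    using R1 by simp
  define L where "L = \<bar>u - v\<bar>"
  define Z where "Z = exp (- m * L)"
  have key: "(\<integral>\<^sup>+t. ennreal (Sv g (t-w) * (Fd m (t-u) * Sv m (t-v) + Fd m (t-v) * Sv m (t-u))) \<partial>lborel)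
      \<le> ennreal (L - (1 - Z) / m + (1 + Z) / (g + m) - 2 * Z / (g + 2 * m))"
  proof (cases "u \<le> v")
    case True
    then have "w = v" "L = v - u" by (auto simp: w_def L_def)
    then show ?thesis using K2[OF g m True] unfolding Z_def by simp
  next
    case False
    then have "w = u" "L = u - v" by (auto simp: w_def L_def)
    then show ?thesis using K2[OF g m, of v u] False unfolding Z_def by (simp add: add.commute)
  qed
  have FdSv: "Fd m (w - u) + Fd m (w - v) = 1 - Z" "Sv m (w - v) * Sv m (w - u) = Z"
    unfolding w_def Z_def L_def Fd_def Sv_def by (auto simp: max_def)
  have alg: "c1 * (1 - Z) + (L - (1 - Z) / m + (1 + Z) / (g + m) - 2 * Z / (g + 2 * m)) = L + c2 * Z"
  proof -
    have a: "g + m \<noteq> 0" "m \<noteq> 0" "g + 2 * m \<noteq> 0" using g m by auto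
    have "c1 - 1 / m = - 1 / (g + m)" unfolding c1_def using a by (simp add: divide_simps)
    moreover have "2 / (g + m) - 2 / (g + 2 * m) = c2" unfolding c2_def using a by (simp add: divide_simps)
    ultimately have c1e: "c1 = 1 / m - 1 / (g + m)" and c2e: "c2 = 2 * (1 / (g + m)) - 2 * (1 / (g + 2 * m))" by auto
    have e: "(1 - Z) / m = (1 - Z) * (1 / m)" "(1 + Z) / (g + m) = (1 + Z) * (1 / (g + m))"
      "2 * Z / (g + 2 * m) = 2 * Z * (1 / (g + 2 * m))" by simp_all
    have gen: "(p - q) * (1 - Z) + (L - (1 - Z) * p + (1 + Z) * q - 2 * Z * r) = L + (2 * q - 2 * r) * Z" for p q r :: real
      by (simp add: algebra_simps)
    show ?thesis unfolding c1e c2e e by (rule gen)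
  qed
  have n1: "0 \<le> c1 * Fd m (w - u) + c1 * Fd m (w - v)" using c1 Fd_nonneg[OF m] by simp
  have n2: "0 \<le> L - (1 - Z) / m + (1 + Z) / (g + m) - 2 * Z / (g + 2 * m)"
  proof -
    have L0: "0 \<le> L" unfolding L_def by simp
    have Z0: "0 < Z" and Z1: "Z \<le> 1" using m L0 by (auto simp: Z_def)
    have "1 + (- m * L) \<le> Z" unfolding Z_def by (rule exp_ge_add_one_self)
    then have "1 - Z \<le> m * L" by simp
    then have a: "(1 - Z) / m \<le> L" using m by (simp add: divide_le_eq mult.commute)
    have "2 * Z / (g + 2 * m) \<le> 2 * Z / (g + m)" using g m Z0 by (intro divide_left_mono) auto
    also have "\<dots> \<le> (1 + Z) / (g + m)" using Z1 g m by (intro divide_right_mono) auto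
    finally show ?thesis using a by linarith
  qed
  have "(\<integral>\<^sup>+c. \<integral>\<^sup>+b. \<integral>\<^sup>+a. Phi1 c1 u v a b c \<partial>ExpM g \<partial>ExpM m \<partial>ExpM m)
     \<le> ennreal (c1 * Fd m (w - u) + c1 * Fd m (w - v)) + ennreal (L - (1 - Z) / m + (1 + Z) / (g + m) - 2 * Z / (g + 2 * m))"
    unfolding L1 L3 using L2 key by (rule add_mono)
  also have "\<dots> = ennreal (L + c2 * Z)"
    using n1 n2 alg FdSv by (simp add: ennreal_plus[symmetric] distrib_left[symmetric] del: ennreal_plus)
  also have "\<dots> \<le> (\<integral>\<^sup>+c. \<integral>\<^sup>+b. \<integral>\<^sup>+a. Phi2 c2 u v a b c \<partial>ExpM g \<partial>ExpM m \<partial>ExpM m)"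
    using R2 FdSv unfolding L_def by simp
  finally show ?thesis .
qed

definition Az :: "(idx \<Rightarrow> real) \<Rightarrow> nat \<Rightarrow> real" where
  "Az z = arrival (\<lambda>k. z (Arr k))"
definition fr :: "(idx \<Rightarrow> real) \<Rightarrow> nat \<Rightarrow> real \<times> real \<times> real" where
  "fr z n = free (Az z) (\<lambda>k. z (SysS k)) (\<lambda>k. z (RecB k)) (\<lambda>k. z (RecC k)) n"
definition tbz :: "(idx \<Rightarrow> real) \<Rightarrow> nat \<Rightarrow> real" where
  "tbz z n = max (Az z n) (fst (snd (fr z n)))"
definition tcz :: "(idx \<Rightarrow> real) \<Rightarrow> nat \<Rightarrow> real" where
  "tcz z n = max (Az z n) (snd (snd (fr z n)))"
definition Iset :: "nat \<Rightarrow> idx set" where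
  "Iset n = Arr ` {..n} \<union> SysS ` {..<n} \<union> RecB ` {..<n} \<union> RecC ` {..<n}"

lemma free_local:
  assumes "\<And>k. k < n \<Longrightarrow> A k = A' k \<and> Sa k = Sa' k \<and> Sb k = Sb' k \<and> Sc k = Sc' k"
  shows "free A Sa Sb Sc n = free A' Sa' Sb' Sc' n"
  using assms
proof (induction n)
  case 0 show ?case by simp
next
  case (Suc n)
  have e: "free A Sa Sb Sc n = free A' Sa' Sb' Sc' n" using Suc by auto
  have "A n = A' n" "Sa n = Sa' n" "Sb n = Sb' n" "Sc n = Sc' n" using Suc.prems[of n] by auto
  then show ?case by (simp only: free.simps e)
qed

lemma tz_local:
  assumes "\<And>i. i \<in> Iset n \<Longrightarrow> z i = z' i"
  shows "tbz z n = tbz z' n" "tcz z n = tcz z' n"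
proof -
  have A: "Az z k = Az z' k" if "k \<le> n" for k
    unfolding Az_def arrival_def using that assms by (intro sum.cong) (auto simp: Iset_def)
  have "fr z n = fr z' n" unfolding fr_def
    by (rule free_local) (use A assms in \<open>auto simp: Iset_def\<close>)
  then show "tbz z n = tbz z' n" "tcz z n = tcz z' n" unfolding tbz_def tcz_def using A by auto
qed

lemma free_Suc':
  "free A Sa Sb Sc (Suc n) = (let e = free A Sa Sb Sc n;
       ta = max (A n) (fst e); tb = max (A n) (fst (snd e)); tc = max (A n) (snd (snd e));
       fa = ta + Sa n; fb = tb + Sb n; fc = tc + Sc n; c = min fa (max fb fc)
     in (min fa c, min fb c, min fc c))"
  by (simp only: free.simps split_beta Let_def)

lemma free_meas:
  assumes [measurable]: "\<And>k. (\<lambda>x. A x k) \<in> borel_measurable N" "\<And>k. (\<lambda>x. Sa x k) \<in> borel_measurable N"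
    "\<And>k. (\<lambda>x. Sb x k) \<in> borel_measurable N" "\<And>k. (\<lambda>x. Sc x k) \<in> borel_measurable N"
  shows "(\<lambda>x. fst (free (A x) (Sa x) (Sb x) (Sc x) n)) \<in> borel_measurable N
    \<and> (\<lambda>x. fst (snd (free (A x) (Sa x) (Sb x) (Sc x) n))) \<in> borel_measurable N
    \<and> (\<lambda>x. snd (snd (free (A x) (Sa x) (Sb x) (Sc x) n))) \<in> borel_measurable N"
proof (induction n)
  case 0 show ?case by simp
next
  case (Suc n)
  then have [measurable]: "(\<lambda>x. fst (free (A x) (Sa x) (Sb x) (Sc x) n)) \<in> borel_measurable N"
    "(\<lambda>x. fst (snd (free (A x) (Sa x) (Sb x) (Sc x) n))) \<in> borel_measurable N"
    "(\<lambda>x. snd (snd (free (A x) (Sa x) (Sb x) (Sc x) n))) \<in> borel_measurable N" by auto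
  show ?case unfolding free_Suc' Let_def fst_conv snd_conv by measurable
qed

lemma tz_meas:
  assumes [measurable]: "\<And>i. (\<lambda>x. z x i) \<in> borel_measurable N"
  shows "(\<lambda>x. tbz (z x) n) \<in> borel_measurable N" "(\<lambda>x. tcz (z x) n) \<in> borel_measurable N"
proof -
  have [measurable]: "(\<lambda>x. Az (z x) k) \<in> borel_measurable N" for k unfolding Az_def arrival_def by measurable
  have fm: "(\<lambda>x. fst (snd (fr (z x) n))) \<in> borel_measurable N" "(\<lambda>x. snd (snd (fr (z x) n))) \<in> borel_measurable N"
    unfolding fr_def using free_meas[of "\<lambda>x. Az (z x)" N "\<lambda>x k. z x (SysS k)" "\<lambda>x k. z x (RecB k)" "\<lambda>x k. z x (RecC k)" n]
    by auto
  show "(\<lambda>x. tbz (z x) n) \<in> borel_measurable N" "(\<lambda>x. tcz (z x) n) \<in> borel_measurable N"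
    unfolding tbz_def tcz_def using fm by measurable
qed

lemma coord_meas: "(\<lambda>x. x i) \<in> borel_measurable (PiM J (\<lambda>_. borel :: real measure))"
proof (cases "i \<in> J")
  case True then show ?thesis by (rule measurable_component_singleton)
next
  case False
  show ?thesis
    by (rule measurable_cong[THEN iffD2, of _ _ "\<lambda>_. undefined"]) (use False in \<open>auto simp: space_PiM PiE_def extensional_def\<close>)
qed

lemma ins_meas:
  assumes psf: "product_sigma_finite D" and f: "f \<in> borel_measurable (PiM (insert i I) D)"
  shows "(\<lambda>y. \<integral>\<^sup>+a. f (y(i := a)) \<partial>D i) \<in> borel_measurable (PiM I D)"
proof -
  interpret product_sigma_finite D by (rule psf)
  have "(\<lambda>(y, a). f (y(i := a))) \<in> borel_measurable (PiM I D \<Otimes>\<^sub>M D i)"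
    using measurable_comp[OF measurable_add_dim f] by (simp add: comp_def case_prod_beta)
  then show ?thesis
    using sigma_finite_measure.borel_measurable_nn_integral[OF sigma_finite_measures[of i], of "\<lambda>y a. f (y(i := a))" "PiM I D"]
    by simp
qed

lemma prod3:
  assumes psf: "product_sigma_finite D" and fin: "finite I"
    and d: "i \<notin> insert j (insert k I)" "j \<notin> insert k I" "k \<notin> I"
    and f: "f \<in> borel_measurable (PiM (insert i (insert j (insert k I))) D)"
  shows "integral\<^sup>N (PiM (insert i (insert j (insert k I))) D) f
    = (\<integral>\<^sup>+x. \<integral>\<^sup>+c. \<integral>\<^sup>+b. \<integral>\<^sup>+a. f (x(k := c, j := b, i := a)) \<partial>D i \<partial>D j \<partial>D k \<partial>(PiM I D))"
proof -
  interpret product_sigma_finite D by (rule psf)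
  have f1: "(\<lambda>y. \<integral>\<^sup>+a. f (y(i := a)) \<partial>D i) \<in> borel_measurable (PiM (insert j (insert k I)) D)"
    by (rule ins_meas[OF psf f])
  have f2: "(\<lambda>y. \<integral>\<^sup>+b. \<integral>\<^sup>+a. f (y(j := b, i := a)) \<partial>D i \<partial>D j) \<in> borel_measurable (PiM (insert k I) D)"
    using ins_meas[OF psf f1] by simp
  have "integral\<^sup>N (PiM (insert i (insert j (insert k I))) D) f
      = (\<integral>\<^sup>+y. \<integral>\<^sup>+a. f (y(i := a)) \<partial>D i \<partial>(PiM (insert j (insert k I)) D))"
    by (rule product_nn_integral_insert) (use fin d f in auto)
  also have "\<dots> = (\<integral>\<^sup>+y. \<integral>\<^sup>+b. \<integral>\<^sup>+a. f (y(j := b, i := a)) \<partial>D i \<partial>D j \<partial>(PiM (insert k I) D))"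
    by (rule product_nn_integral_insert) (use fin d f1 in auto)
  also have "\<dots> = (\<integral>\<^sup>+x. \<integral>\<^sup>+c. \<integral>\<^sup>+b. \<integral>\<^sup>+a. f (x(k := c, j := b, i := a)) \<partial>D i \<partial>D j \<partial>D k \<partial>(PiM I D))"
    by (rule product_nn_integral_insert) (use fin d f2 in auto)
  finally show ?thesis .
qed

lemma finite_Iset: "finite (Iset n)" unfolding Iset_def by auto

lemma disint:
  fixes M :: "'w measure" and Z :: "idx \<Rightarrow> 'w \<Rightarrow> real" and \<Phi> :: "real \<Rightarrow> real \<Rightarrow> real \<Rightarrow> real \<Rightarrow> real \<Rightarrow> ennreal"
  assumes P: "prob_space M" and ind: "prob_space.indep_vars M (\<lambda>_. borel) Z UNIV"
    and dS: "distributed M lborel (Z (SysS n)) (exponential_density g)"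
    and dB: "distributed M lborel (Z (RecB n)) (exponential_density m)"
    and dC: "distributed M lborel (Z (RecC n)) (exponential_density m)"
    and \<Phi>m: "(\<lambda>p. \<Phi> (fst p) (fst (snd p)) (fst (snd (snd p))) (fst (snd (snd (snd p)))) (snd (snd (snd (snd p)))))
        \<in> borel_measurable (borel \<Otimes>\<^sub>M (borel \<Otimes>\<^sub>M (borel \<Otimes>\<^sub>M (borel \<Otimes>\<^sub>M borel))))"
  shows "(\<integral>\<^sup>+\<omega>. \<Phi> (tbz (\<lambda>i. Z i \<omega>) n) (tcz (\<lambda>i. Z i \<omega>) n) (Z (SysS n) \<omega>) (Z (RecB n) \<omega>) (Z (RecC n) \<omega>) \<partial>M)
    = (\<integral>\<^sup>+x. (\<integral>\<^sup>+c. \<integral>\<^sup>+b. \<integral>\<^sup>+a. \<Phi> (tbz x n) (tcz x n) a b c \<partial>ExpM g \<partial>ExpM m \<partial>ExpM m)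
         \<partial>(PiM (Iset n) (\<lambda>i. distr M borel (Z i))))"
proof -
  interpret prob_space M by (rule P)
  have rv[measurable]: "Z i \<in> borel_measurable M" for i using ind unfolding indep_vars_def by auto
  define I where "I = Iset n"
  define J where "J = insert (SysS n) (insert (RecB n) (insert (RecC n) I))"
  have fin: "finite I" unfolding I_def by (rule finite_Iset)
  have d: "SysS n \<notin> insert (RecB n) (insert (RecC n) I)" "RecB n \<notin> insert (RecC n) I" "RecC n \<notin> I"
    unfolding I_def Iset_def by auto
  define D where "D i = distr M borel (Z i)" for i
  have indJ: "indep_vars (\<lambda>_. borel) Z J" by (rule indep_vars_subset[OF ind]) auto
  have distrJ: "distr M (PiM J (\<lambda>_. borel)) (\<lambda>\<omega>. \<lambda>i\<in>J. Z i \<omega>) = PiM J D"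
    using indep_vars_iff_distr_eq_PiM[of J Z "\<lambda>_. borel"] indJ unfolding D_def J_def by auto
  have psf: "product_sigma_finite D"
    unfolding product_sigma_finite_def D_def by (auto intro!: prob_space_imp_sigma_finite prob_space_distr)
  define F where "F x = \<Phi> (tbz x n) (tcz x n) (x (SysS n)) (x (RecB n)) (x (RecC n))" for x
  have Fm: "F \<in> borel_measurable (PiM J (\<lambda>_. borel))"
  proof -
    have [measurable]: "(\<lambda>x. tbz x n) \<in> borel_measurable (PiM J (\<lambda>_. borel))" "(\<lambda>x. tcz x n) \<in> borel_measurable (PiM J (\<lambda>_. borel))"
      using tz_meas[of "\<lambda>x. x" "PiM J (\<lambda>_. borel)" n, OF coord_meas] by auto
    have [measurable]: "(\<lambda>x::idx \<Rightarrow> real. x i) \<in> borel_measurable (PiM J (\<lambda>_. borel))" for i using coord_meas[of i J] by simp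
    have "(\<lambda>x. (tbz x n, tcz x n, x (SysS n), x (RecB n), x (RecC n))) \<in>
       measurable (PiM J (\<lambda>_. borel)) (borel \<Otimes>\<^sub>M (borel \<Otimes>\<^sub>M (borel \<Otimes>\<^sub>M (borel \<Otimes>\<^sub>M borel))))"
      by measurable
    from measurable_comp[OF this \<Phi>m] have "(\<lambda>x. \<Phi> (tbz x n) (tcz x n) (x (SysS n)) (x (RecB n)) (x (RecC n))) \<in> borel_measurable (PiM J (\<lambda>_. borel))"
      by (simp add: comp_def)
    then show ?thesis unfolding F_def[abs_def] .
  qed
  have sJ: "sets (PiM J D) = sets (PiM J (\<lambda>_. borel))" by (rule sets_PiM_cong) (auto simp: D_def)
  have FmD: "F \<in> borel_measurable (PiM J D)"
    using Fm measurable_cong_sets[OF sJ refl, where ?N="borel :: ennreal measure"] by simp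
  have loc: "F (\<lambda>i\<in>J. Z i \<omega>) = \<Phi> (tbz (\<lambda>i. Z i \<omega>) n) (tcz (\<lambda>i. Z i \<omega>) n) (Z (SysS n) \<omega>) (Z (RecB n) \<omega>) (Z (RecC n) \<omega>)" for \<omega>
  proof -
    have "tbz (\<lambda>i\<in>J. Z i \<omega>) n = tbz (\<lambda>i. Z i \<omega>) n" "tcz (\<lambda>i\<in>J. Z i \<omega>) n = tcz (\<lambda>i. Z i \<omega>) n"
      by (rule tz_local; simp add: J_def I_def)+
    then show ?thesis unfolding F_def by (simp add: J_def)
  qed
  have "(\<integral>\<^sup>+\<omega>. \<Phi> (tbz (\<lambda>i. Z i \<omega>) n) (tcz (\<lambda>i. Z i \<omega>) n) (Z (SysS n) \<omega>) (Z (RecB n) \<omega>) (Z (RecC n) \<omega>) \<partial>M)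
      = (\<integral>\<^sup>+\<omega>. F (\<lambda>i\<in>J. Z i \<omega>) \<partial>M)" by (simp add: loc)
  also have "\<dots> = (\<integral>\<^sup>+x. F x \<partial>distr M (PiM J (\<lambda>_. borel)) (\<lambda>\<omega>. \<lambda>i\<in>J. Z i \<omega>))"
  proof -
    have rX: "(\<lambda>\<omega>. \<lambda>i\<in>J. Z i \<omega>) \<in> measurable M (PiM J (\<lambda>_. borel))"
      by (rule measurable_restrict) simp
    show ?thesis by (rule nn_integral_distr[symmetric, OF rX]) (use Fm in simp)
  qed
  also have "\<dots> = integral\<^sup>N (PiM J D) F" unfolding distrJ ..
  also have "\<dots> = (\<integral>\<^sup>+x. \<integral>\<^sup>+c. \<integral>\<^sup>+b. \<integral>\<^sup>+a. F (x(RecC n := c, RecB n := b, SysS n := a)) \<partial>D (SysS n) \<partial>D (RecB n) \<partial>D (RecC n) \<partial>(PiM I D))"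
    unfolding J_def by (rule prod3[OF psf fin d]) (use FmD in \<open>simp add: J_def\<close>)
  also have "\<dots> = (\<integral>\<^sup>+x. (\<integral>\<^sup>+c. \<integral>\<^sup>+b. \<integral>\<^sup>+a. \<Phi> (tbz x n) (tcz x n) a b c \<partial>ExpM g \<partial>ExpM m \<partial>ExpM m) \<partial>(PiM I D))"
  proof -
    have DS: "D (SysS n) = ExpM g" "D (RecB n) = ExpM m" "D (RecC n) = ExpM m"
    proof -
      have dc: "distr M borel (Z i) = distr M lborel (Z i)" for i by (rule distr_cong) auto
      show "D (SysS n) = ExpM g" "D (RecB n) = ExpM m" "D (RecC n) = ExpM m"
        unfolding D_def dc using dS dB dC unfolding distributed_def by simp_all
    qed
    have upd: "F (x(RecC n := c, RecB n := b, SysS n := a)) = \<Phi> (tbz x n) (tcz x n) a b c" for x a b c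
    proof -
      have "tbz (x(RecC n := c, RecB n := b, SysS n := a)) n = tbz x n" "tcz (x(RecC n := c, RecB n := b, SysS n := a)) n = tcz x n"
        by (rule tz_local; auto simp: Iset_def)+
      then show ?thesis unfolding F_def by simp
    qed
    show ?thesis unfolding DS upd ..
  qed
  finally show ?thesis unfolding I_def D_def .
qed

definition lead :: "(idx \<Rightarrow> real) \<Rightarrow> nat \<Rightarrow> real" where
  "lead z n = \<bar>tbz z n - tcz z n\<bar>"

lemma fr_split: "fr z n = (fst (fr z n), fst (snd (fr z n)), snd (snd (fr z n)))" by simp

lemma req_type1_iff:
  "req_type1 Z \<omega> n \<longleftrightarrow> tbz (\<lambda>i. Z i \<omega>) n + Z (RecB n) \<omega> < max (tbz (\<lambda>i. Z i \<omega>) n) (tcz (\<lambda>i. Z i \<omega>) n)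
     \<or> tcz (\<lambda>i. Z i \<omega>) n + Z (RecC n) \<omega> < max (tbz (\<lambda>i. Z i \<omega>) n) (tcz (\<lambda>i. Z i \<omega>) n)"
proof -
  let ?z = "\<lambda>i. Z i \<omega>"
  have e1: "req_type1 Z \<omega> n = type1 (Az ?z) (\<lambda>k. ?z (SysS k)) (\<lambda>k. ?z (RecB k)) (\<lambda>k. ?z (RecC k)) n"
    unfolding req_type1_def Az_def by simp
  have e2: "type1 (Az ?z) (\<lambda>k. ?z (SysS k)) (\<lambda>k. ?z (RecB k)) (\<lambda>k. ?z (RecC k)) n \<longleftrightarrow>
      max (Az ?z n) (fst (snd (fr ?z n))) + Z (RecB n) \<omega> < max (max (Az ?z n) (fst (snd (fr ?z n)))) (max (Az ?z n) (snd (snd (fr ?z n))))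
    \<or> max (Az ?z n) (snd (snd (fr ?z n))) + Z (RecC n) \<omega> < max (max (Az ?z n) (fst (snd (fr ?z n)))) (max (Az ?z n) (snd (snd (fr ?z n))))"
    using type1_iff[of "Az ?z" "\<lambda>k. ?z (SysS k)" "\<lambda>k. ?z (RecB k)" "\<lambda>k. ?z (RecC k)" n,
        OF fr_split[of ?z n, unfolded fr_def]]
    unfolding fr_def by blast
  show ?thesis unfolding e1 e2 tbz_def tcz_def ..
qed

lemma lead0: "lead z 0 = 0"
  unfolding lead_def tbz_def tcz_def fr_def by simp

lemma lead_Suc:
  "lead z (Suc n) \<le> \<bar>min (max (tbz z n) (tcz z n) + z (SysS n)) (tbz z n + z (RecB n))
       - min (max (tbz z n) (tcz z n) + z (SysS n)) (tcz z n + z (RecC n))\<bar>"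
  unfolding lead_def tbz_def tcz_def
  using lead_step[of "Az z" "\<lambda>k. z (SysS k)" "\<lambda>k. z (RecB k)" "\<lambda>k. z (RecC k)" n,
      OF fr_split[of z n, unfolded fr_def] fr_split[of z "Suc n", unfolded fr_def]]
  unfolding fr_def by blast

lemma Phi1_meas: "(\<lambda>p. Phi1 k (fst p) (fst (snd p)) (fst (snd (snd p))) (fst (snd (snd (snd p)))) (snd (snd (snd (snd p)))))
        \<in> borel_measurable (borel \<Otimes>\<^sub>M (borel \<Otimes>\<^sub>M (borel \<Otimes>\<^sub>M (borel \<Otimes>\<^sub>M borel))))"
  unfolding Phi1_def by measurable

lemma Phi2_meas: "(\<lambda>p. Phi2 k (fst p) (fst (snd p)) (fst (snd (snd p))) (fst (snd (snd (snd p)))) (snd (snd (snd (snd p)))))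
        \<in> borel_measurable (borel \<Otimes>\<^sub>M (borel \<Otimes>\<^sub>M (borel \<Otimes>\<^sub>M (borel \<Otimes>\<^sub>M borel))))"
  unfolding Phi2_def by measurable

lemma step:
  fixes M :: "'w measure" and Z :: "idx \<Rightarrow> 'w \<Rightarrow> real" and g m :: real
  assumes P: "prob_space M" and ind: "prob_space.indep_vars M (\<lambda>_. borel) Z UNIV"
    and dS: "distributed M lborel (Z (SysS n)) (exponential_density g)"
    and dB: "distributed M lborel (Z (RecB n)) (exponential_density m)"
    and dC: "distributed M lborel (Z (RecC n)) (exponential_density m)"
    and g: "0 < g" and m: "0 < m"
  defines "c1 \<equiv> g / (m * (g + m))" and "c2 \<equiv> 2 * m / ((g + 2 * m) * (g + m))"
  shows "(\<integral>\<^sup>+\<omega>. (if req_type1 Z \<omega> n then ennreal c1 else 0) \<partial>M) + (\<integral>\<^sup>+\<omega>. ennreal (lead (\<lambda>i. Z i \<omega>) (Suc n)) \<partial>M)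
      \<le> (\<integral>\<^sup>+\<omega>. ennreal (lead (\<lambda>i. Z i \<omega>) n) \<partial>M) + (\<integral>\<^sup>+\<omega>. (if req_type1 Z \<omega> n then 0 else ennreal c2) \<partial>M)"
proof -
  interpret prob_space M by (rule P)
  have rv[measurable]: "Z i \<in> borel_measurable M" for i using ind unfolding indep_vars_def by auto
  have zm: "\<And>i. (\<lambda>\<omega>. Z i \<omega>) \<in> borel_measurable M" by simp
  have tm[measurable]: "(\<lambda>\<omega>. tbz (\<lambda>i. Z i \<omega>) k) \<in> borel_measurable M" "(\<lambda>\<omega>. tcz (\<lambda>i. Z i \<omega>) k) \<in> borel_measurable M" for k
    using tz_meas[of "\<lambda>\<omega> i. Z i \<omega>" M k] by auto
  let ?tb = "\<lambda>\<omega>. tbz (\<lambda>i. Z i \<omega>) n" and ?tc = "\<lambda>\<omega>. tcz (\<lambda>i. Z i \<omega>) n"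
  have T1[measurable]: "Measurable.pred M (\<lambda>\<omega>. req_type1 Z \<omega> n)"
    unfolding req_type1_iff by measurable
  have lm[measurable]: "(\<lambda>\<omega>. lead (\<lambda>i. Z i \<omega>) k) \<in> borel_measurable M" for k
    unfolding lead_def by measurable
  have "(\<integral>\<^sup>+\<omega>. (if req_type1 Z \<omega> n then ennreal c1 else 0) \<partial>M) + (\<integral>\<^sup>+\<omega>. ennreal (lead (\<lambda>i. Z i \<omega>) (Suc n)) \<partial>M)
      = (\<integral>\<^sup>+\<omega>. (if req_type1 Z \<omega> n then ennreal c1 else 0) + ennreal (lead (\<lambda>i. Z i \<omega>) (Suc n)) \<partial>M)"
    by (rule nn_integral_add[symmetric]) auto
  also have "\<dots> \<le> (\<integral>\<^sup>+\<omega>. Phi1 c1 (?tb \<omega>) (?tc \<omega>) (Z (SysS n) \<omega>) (Z (RecB n) \<omega>) (Z (RecC n) \<omega>) \<partial>M)"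
  proof (rule nn_integral_mono)
    fix \<omega> assume "\<omega> \<in> space M"
    show "(if req_type1 Z \<omega> n then ennreal c1 else 0) + ennreal (lead (\<lambda>i. Z i \<omega>) (Suc n))
        \<le> Phi1 c1 (?tb \<omega>) (?tc \<omega>) (Z (SysS n) \<omega>) (Z (RecB n) \<omega>) (Z (RecC n) \<omega>)"
      unfolding Phi1_def req_type1_iff using lead_Suc[of "\<lambda>i. Z i \<omega>" n]
      by (intro add_mono) auto
  qed
  also have "\<dots> = (\<integral>\<^sup>+x. (\<integral>\<^sup>+c. \<integral>\<^sup>+b. \<integral>\<^sup>+a. Phi1 c1 (tbz x n) (tcz x n) a b c \<partial>ExpM g \<partial>ExpM m \<partial>ExpM m)
         \<partial>(PiM (Iset n) (\<lambda>i. distr M borel (Z i))))"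
    by (rule disint[OF P ind dS dB dC Phi1_meas])
  also have "\<dots> \<le> (\<integral>\<^sup>+x. (\<integral>\<^sup>+c. \<integral>\<^sup>+b. \<integral>\<^sup>+a. Phi2 c2 (tbz x n) (tcz x n) a b c \<partial>ExpM g \<partial>ExpM m \<partial>ExpM m)
         \<partial>(PiM (Iset n) (\<lambda>i. distr M borel (Z i))))"
    by (rule nn_integral_mono) (unfold c1_def c2_def, rule IL[OF g m])
  also have "\<dots> = (\<integral>\<^sup>+\<omega>. Phi2 c2 (?tb \<omega>) (?tc \<omega>) (Z (SysS n) \<omega>) (Z (RecB n) \<omega>) (Z (RecC n) \<omega>) \<partial>M)"
    by (rule disint[OF P ind dS dB dC Phi2_meas, symmetric])
  also have "\<dots> = (\<integral>\<^sup>+\<omega>. ennreal (lead (\<lambda>i. Z i \<omega>) n) + (if req_type1 Z \<omega> n then 0 else ennreal c2) \<partial>M)"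
    unfolding Phi2_def req_type1_iff lead_def by simp
  also have "\<dots> = (\<integral>\<^sup>+\<omega>. ennreal (lead (\<lambda>i. Z i \<omega>) n) \<partial>M) + (\<integral>\<^sup>+\<omega>. (if req_type1 Z \<omega> n then 0 else ennreal c2) \<partial>M)"
    by (rule nn_integral_add) auto
  finally show ?thesis .
qed

theorem theorem6:
  fixes M :: "'w measure" and Z :: "idx \<Rightarrow> 'w \<Rightarrow> real"
    and lam gam mu f0 f1 :: real
  assumes "prob_space M"
    and "lam > 0" and "gam > 0" and "mu > 0"
    and "prob_space.indep_vars M (\<lambda>_. borel) Z UNIV"
    and "\<And>n. distributed M lborel (Z (Arr n)) (exponential_density lam)"
    and "\<And>n. distributed M lborel (Z (SysS n)) (exponential_density gam)"
    and "\<And>n. distributed M lborel (Z (RecB n)) (exponential_density mu)"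
    and "\<And>n. distributed M lborel (Z (RecC n)) (exponential_density mu)"
    and "AE \<omega> in M. frac0 Z \<omega> \<longlonglongrightarrow> f0"
    and "AE \<omega> in M. frac1 Z \<omega> \<longlonglongrightarrow> f1"
    and "f0 + f1 = 1"
  shows "f0 \<ge> gam * (gam + 2 * mu) / (gam * (gam + 2 * mu) + 2 * mu ^ 2)
       \<and> f1 \<le> 2 * mu ^ 2 / (gam * (gam + 2 * mu) + 2 * mu ^ 2)"
proof -
  note P = assms(1) and g = assms(3) and m = assms(4) and ind = assms(5)
    and dS = assms(7) and dB = assms(8) and dC = assms(9) and lim1 = assms(11)
  interpret prob_space M by (rule P)
  define c1 where "c1 = gam / (mu * (gam + mu))"
  define c2 where "c2 = 2 * mu / ((gam + 2 * mu) * (gam + mu))"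
  define D where "D = gam * (gam + 2 * mu) + 2 * mu ^ 2"
  define \<beta> where "\<beta> = 2 * mu ^ 2 / D"
  have c1p: "0 < c1" and c2p: "0 < c2" and Dp: "0 < D" unfolding c1_def c2_def D_def using g m by (auto intro!: add_pos_pos mult_pos_pos)
  have rv[measurable]: "Z i \<in> borel_measurable M" for i using ind unfolding indep_vars_def by auto
  have tm[measurable]: "(\<lambda>\<omega>. tbz (\<lambda>i. Z i \<omega>) k) \<in> borel_measurable M" "(\<lambda>\<omega>. tcz (\<lambda>i. Z i \<omega>) k) \<in> borel_measurable M" for k
    using tz_meas[of "\<lambda>\<omega> i. Z i \<omega>" M k] by auto
  have T1[measurable]: "Measurable.pred M (\<lambda>\<omega>. req_type1 Z \<omega> k)" for k
    unfolding req_type1_iff by measurable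
  define S where "S k = {\<omega> \<in> space M. req_type1 Z \<omega> k}" for k
  have Ss[measurable]: "S k \<in> sets M" for k unfolding S_def by measurable
  define pr where "pr k = measure M (S k)" for k
  have pr01: "0 \<le> pr k" "pr k \<le> 1" for k unfolding pr_def by auto
  define ell where "ell k = (\<integral>\<^sup>+\<omega>. ennreal (lead (\<lambda>i. Z i \<omega>) k) \<partial>M)" for k
  have hA: "(\<integral>\<^sup>+\<omega>. (if req_type1 Z \<omega> k then ennreal c1 else 0) \<partial>M) = ennreal (c1 * pr k)" for k
  proof -
    have "(\<integral>\<^sup>+\<omega>. (if req_type1 Z \<omega> k then ennreal c1 else 0) \<partial>M) = (\<integral>\<^sup>+\<omega>. ennreal c1 * indicator (S k) \<omega> \<partial>M)"
      by (rule nn_integral_cong) (auto simp: S_def indicator_def)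
    also have "\<dots> = ennreal c1 * emeasure M (S k)" by (rule nn_integral_cmult_indicator) simp
    also have "\<dots> = ennreal (c1 * pr k)" unfolding pr_def emeasure_eq_measure using c1p by (simp add: ennreal_mult)
    finally show ?thesis .
  qed
  have hB: "(\<integral>\<^sup>+\<omega>. (if req_type1 Z \<omega> k then 0 else ennreal c2) \<partial>M) = ennreal (c2 * (1 - pr k))" for k
  proof -
    have "(\<integral>\<^sup>+\<omega>. (if req_type1 Z \<omega> k then 0 else ennreal c2) \<partial>M) = (\<integral>\<^sup>+\<omega>. ennreal c2 * indicator (space M - S k) \<omega> \<partial>M)"
      by (rule nn_integral_cong) (auto simp: S_def indicator_def)
    also have "\<dots> = ennreal c2 * emeasure M (space M - S k)" by (rule nn_integral_cmult_indicator) simp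
    also have "\<dots> = ennreal (c2 * (1 - pr k))" unfolding pr_def emeasure_eq_measure prob_compl[OF Ss]
      using c2p by (simp add: ennreal_mult)
    finally show ?thesis .
  qed
  have stepk: "ennreal (c1 * pr k) + ell (Suc k) \<le> ell k + ennreal (c2 * (1 - pr k))" for k
    using step[OF P ind dS dB dC g m, of k] unfolding c1_def[symmetric] c2_def[symmetric] hA hB ell_def[symmetric] .
  have l0: "ell 0 = 0" unfolding ell_def lead0 by simp
  have ind_claim: "ennreal (c1 * (\<Sum>k<N. pr k)) + ell N \<le> ennreal (c2 * (\<Sum>k<N. (1 - pr k)))" for N
  proof (induction N)
    case 0 show ?case by (simp add: l0)
  next
    case (Suc N)
    have n1: "0 \<le> c1 * (\<Sum>k<N. pr k)" "0 \<le> c1 * pr N" using c1p pr01 by (auto intro!: sum_nonneg mult_nonneg_nonneg)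
    have n2: "0 \<le> c2 * (\<Sum>k<N. (1 - pr k))" "0 \<le> c2 * (1 - pr N)" using c2p pr01 by (auto intro!: sum_nonneg mult_nonneg_nonneg)
    have "ennreal (c1 * (\<Sum>k<Suc N. pr k)) + ell (Suc N) = ennreal (c1 * (\<Sum>k<N. pr k)) + (ennreal (c1 * pr N) + ell (Suc N))"
      using ennreal_plus[OF n1] by (simp add: distrib_left add.assoc)
    also have "\<dots> \<le> ennreal (c1 * (\<Sum>k<N. pr k)) + (ell N + ennreal (c2 * (1 - pr N)))"
      by (rule add_left_mono) (rule stepk)
    also have "\<dots> = (ennreal (c1 * (\<Sum>k<N. pr k)) + ell N) + ennreal (c2 * (1 - pr N))"
      by (simp add: add.assoc)
    also have "\<dots> \<le> ennreal (c2 * (\<Sum>k<N. (1 - pr k))) + ennreal (c2 * (1 - pr N))"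
      by (rule add_right_mono) (rule Suc.IH)
    also have "\<dots> = ennreal (c2 * (\<Sum>k<Suc N. (1 - pr k)))"
      using ennreal_plus[OF n2] by (simp add: distrib_left)
    finally show ?case .
  qed
  have sum_bound: "(\<Sum>k<N. pr k) \<le> \<beta> * real N" for N
  proof -
    have "ennreal (c1 * (\<Sum>k<N. pr k)) \<le> ennreal (c2 * (\<Sum>k<N. (1 - pr k)))"
      using ind_claim[of N] by (rule order_trans[rotated]) simp
    moreover have "0 \<le> c2 * (\<Sum>k<N. (1 - pr k))" using c2p pr01 by (auto intro!: sum_nonneg mult_nonneg_nonneg)
    ultimately have "c1 * (\<Sum>k<N. pr k) \<le> c2 * (\<Sum>k<N. (1 - pr k))" by (simp add: ennreal_le_iff)
    also have "(\<Sum>k<N. (1 - pr k)) = real N - (\<Sum>k<N. pr k)" by (simp add: sum_subtractf)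
    finally have ineq: "c1 * (\<Sum>k<N. pr k) \<le> c2 * (real N - (\<Sum>k<N. pr k))" .
    define K where "K = mu * (gam + mu) * (gam + 2 * mu)"
    have Kp: "0 < K" unfolding K_def using g m by auto
    have nz: "mu * (gam + mu) \<noteq> 0" "(gam + 2 * mu) * (gam + mu) \<noteq> 0" using g m by auto
    have K1: "K = (mu * (gam + mu)) * (gam + 2 * mu)" and K2: "K = ((gam + 2 * mu) * (gam + mu)) * mu"
      unfolding K_def by (simp_all add: algebra_simps)
    have e1: "c1 * K = gam * (gam + 2 * mu)" unfolding c1_def K1 using nz(1) by simp
    have e2: "c2 * K = 2 * mu ^ 2" unfolding c2_def K2 using nz(2) by (simp add: power2_eq_square)
    from mult_right_mono[OF ineq less_imp_le[OF Kp]]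
    have "(c1 * K) * (\<Sum>k<N. pr k) \<le> (c2 * K) * (real N - (\<Sum>k<N. pr k))" by (simp add: algebra_simps)
    then have "gam * (gam + 2 * mu) * (\<Sum>k<N. pr k) \<le> 2 * mu ^ 2 * (real N - (\<Sum>k<N. pr k))" unfolding e1 e2 .
    then have "D * (\<Sum>k<N. pr k) \<le> 2 * mu ^ 2 * real N" unfolding D_def by (simp add: algebra_simps)
    then show ?thesis unfolding \<beta>_def using Dp by (simp add: field_simps)
  qed
  have frac_eq: "frac1 Z \<omega> N = (\<Sum>k<N. indicator (S k) \<omega>) / real N" if "\<omega> \<in> space M" for \<omega> N
  proof -
    have c: "card {k \<in> {..<N}. req_type1 Z \<omega> k} = (\<Sum>k<N. if req_type1 Z \<omega> k then 1 else 0 :: nat)"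
      by (subst card_eq_sum) (rule sum.inter_filter, simp)
    have "real (card {k \<in> {..<N}. req_type1 Z \<omega> k}) = (\<Sum>k<N. real (if req_type1 Z \<omega> k then 1 else 0 :: nat))"
      unfolding c by (rule of_nat_sum)
    also have "\<dots> = (\<Sum>k<N. indicator (S k) \<omega>)"
      by (rule sum.cong) (auto simp: S_def indicator_def that)
    finally have "real (card {k \<in> {..<N}. req_type1 Z \<omega> k}) = (\<Sum>k<N. indicator (S k) \<omega>)" .
    then show ?thesis unfolding frac1_def by simp
  qed
  have fm[measurable]: "(\<lambda>\<omega>. frac1 Z \<omega> N) \<in> borel_measurable M" for N
    by (rule measurable_cong[THEN iffD2, OF frac_eq]) measurable
  have Eeq: "(\<integral>\<omega>. frac1 Z \<omega> N \<partial>M) = (\<Sum>k<N. pr k) / real N" for N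
  proof -
    have "(\<integral>\<omega>. frac1 Z \<omega> N \<partial>M) = (\<integral>\<omega>. (\<Sum>k<N. indicator (S k) \<omega>) / real N \<partial>M)"
      by (rule Bochner_Integration.integral_cong[OF refl]) (simp add: frac_eq)
    also have "\<dots> = (\<integral>\<omega>. (\<Sum>k<N. indicator (S k) \<omega>) \<partial>M) / real N" by simp
    also have "(\<integral>\<omega>. (\<Sum>k<N. indicator (S k) \<omega> :: real) \<partial>M) = (\<Sum>k<N. (\<integral>\<omega>. indicator (S k) \<omega> \<partial>M))"
      by (rule Bochner_Integration.integral_sum, rule integrable_real_indicator[OF Ss]) (simp add: emeasure_eq_measure)
    also have "\<dots> = (\<Sum>k<N. pr k)"
      by (rule sum.cong) (auto simp: pr_def Int_absorb2 sets.sets_into_space)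
    finally show ?thesis .
  qed
  have Ele: "(\<integral>\<omega>. frac1 Z \<omega> N \<partial>M) \<le> \<beta>" if "1 \<le> N" for N
  proof -
    have "(\<Sum>k<N. pr k) / real N \<le> \<beta>" using sum_bound[of N] that by (simp add: divide_le_eq mult.commute)
    then show ?thesis by (simp add: Eeq)
  qed
  have bnd: "AE \<omega> in M. norm (frac1 Z \<omega> N) \<le> 1" for N
  proof (rule AE_I2)
    fix \<omega> assume "\<omega> \<in> space M"
    have "card {k \<in> {..<N}. req_type1 Z \<omega> k} \<le> card {..<N}" by (rule card_mono) auto
    then have "real (card {k \<in> {..<N}. req_type1 Z \<omega> k}) \<le> real N" by simp
    then show "norm (frac1 Z \<omega> N) \<le> 1" unfolding frac1_def
      by (cases "N = 0") (auto simp: divide_le_eq)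
  qed
  have lim: "(\<lambda>N. \<integral>\<omega>. frac1 Z \<omega> N \<partial>M) \<longlonglongrightarrow> (\<integral>\<omega>. f1 \<partial>M)"
    by (rule integral_dominated_convergence[where w="\<lambda>_. 1"]) (use lim1 bnd in auto)
  have ef: "(\<integral>\<omega>. f1 \<partial>M) = f1" using prob_space by simp
  from lim have "(\<lambda>N. \<integral>\<omega>. frac1 Z \<omega> N \<partial>M) \<longlonglongrightarrow> f1" unfolding ef .
  then have f1le: "f1 \<le> \<beta>" by (rule LIMSEQ_le_const2) (use Ele in auto)
  have "f0 = 1 - f1" using assms(12) by simp
  moreover have "1 - \<beta> = gam * (gam + 2 * mu) / D" unfolding \<beta>_def D_def using Dp[unfolded D_def]
    by (simp add: field_simps)
  ultimately have "f0 \<ge> gam * (gam + 2 * mu) / D" using f1le by simp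
  then show ?thesis using f1le unfolding D_def \<beta>_def by simp
qed

end
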